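(* Let $(X,\rho)$ be a metric space, let $c>0$, and for $x,y\in X$ define $$W(x,y):=\log\Big(1+2c\sinh\frac{\rho(x,y)}{2}\Big).$$ If $c\ge 1$, then $W$ is a metric on $X$. Moreover, if $X=\mathbb{B}^2=\{x\in\mathbb{R}^2:|x|<1\}$ is the unit disk and $\rho=j_{\mathbb{B}^2}$, then $W$ is a metric on $\mathbb{B}^2$ if and only if $c\ge 1$.
   Context: For a proper nonempty open subset $D\subset\mathbb{R}^n$, $d_D(x)=\operatorname{dist}(x,\partial D)$, and the distance ratio metric is $j_D(x,y)=\log\Big(1+\frac{|x-y|}{\min\{d_D(x),d_D(y)\}}\Big)$ for $x,y\in D$. For the unit disk, $d_{\mathbb{B}^2}(x)=1-|x|$. *)

theory Defs
  imports "HOL-Analysis.Analysis"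
begin

definition bdist :: "'a::euclidean_space set \<Rightarrow> 'a \<Rightarrow> real" where
  "bdist D x = infdist x (frontier D)"

definition j_metric :: "'a::euclidean_space set \<Rightarrow> 'a \<Rightarrow> 'a \<Rightarrow> real" where
  "j_metric D x y = ln (1 + dist x y / min (bdist D x) (bdist D y))"

definition W_fun :: "real \<Rightarrow> ('a \<Rightarrow> 'a \<Rightarrow> real) \<Rightarrow> 'a \<Rightarrow> 'a \<Rightarrow> real" where
  "W_fun c \<rho> x y = ln (1 + 2 * c * sinh (\<rho> x y / 2))"

end

theory Submission
  imports Defs
begin

lemma key_ineq:
  fixes a b c :: real
  assumes "a \<ge> 0" "b \<ge> 0" "c \<ge> 1"
  shows "1 + 2*c* sinh ((a+b)/2) \<le> (1 + 2*c* sinh (a/2)) * (1 + 2*c* sinh (b/2))"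
proof -
  define s where "s = a/2"
  define t where "t = b/2"
  have s0: "sinh s \<ge> 0" "sinh t \<ge> 0" using assms by (auto simp: s_def t_def)
  have cs: "cosh s - 1 \<le> sinh s" "cosh t - 1 \<le> sinh t"
  proof -
    have "exp (-s) \<le> 1" "exp (-t) \<le> 1" using assms by (auto simp: s_def t_def)
    then show "cosh s - 1 \<le> sinh s" "cosh t - 1 \<le> sinh t"
      using cosh_minus_sinh[of s] cosh_minus_sinh[of t] by linarith+
  qed
  have ab: "(a+b)/2 = s + t" by (simp add: s_def t_def field_simps)
  have "sinh s * (cosh t - 1) \<le> sinh s * sinh t" using s0 cs by (simp add: mult_left_mono)
  moreover have "sinh t * (cosh s - 1) \<le> sinh t * sinh s" using s0 cs by (simp add: mult_left_mono)
  moreover have "2 * (sinh s * sinh t) \<le> 2 * c * (sinh s * sinh t)"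
    using assms s0 by (simp add: mult_right_mono)
  ultimately have "sinh s * cosh t + cosh s * sinh t \<le> sinh s + sinh t + 2*c * (sinh s * sinh t)"
    by (simp add: algebra_simps)
  then have "2*c * (sinh s * cosh t + cosh s * sinh t) \<le> 2*c * (sinh s + sinh t + 2*c * (sinh s * sinh t))"
    using assms by (intro mult_left_mono) auto
  moreover have "a/2 = s" "b/2 = t" by (simp_all add: s_def t_def)
  ultimately show ?thesis unfolding ab by (simp add: sinh_add algebra_simps)
qed

lemma W_metric:
  assumes M: "Metric_space X \<rho>" and c: "c \<ge> 1"
  shows "Metric_space X (W_fun c \<rho>)"
proof
  interpret Metric_space X \<rho> by (rule M)
  have pos: "1 + 2*c* sinh (\<rho> x y / 2) \<ge> 1" for x y
  proof -
    have "sinh (\<rho> x y / 2) \<ge> 0" using nonneg[of x y] by simp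
    then have "2*c* sinh (\<rho> x y / 2) \<ge> 0" using c by simp
    then show ?thesis by linarith
  qed
  show "0 \<le> W_fun c \<rho> x y" for x y
    unfolding W_fun_def using pos[of x y] by simp
  show "W_fun c \<rho> x y = W_fun c \<rho> y x" for x y
    unfolding W_fun_def using commute[of x y] by simp
  show "W_fun c \<rho> x y = 0 \<longleftrightarrow> x = y" if "x \<in> X" "y \<in> X" for x y
  proof -
    have "W_fun c \<rho> x y = 0 \<longleftrightarrow> 1 + 2*c* sinh (\<rho> x y / 2) = 1"
      unfolding W_fun_def using pos[of x y] by simp
    also have "\<dots> \<longleftrightarrow> \<rho> x y = 0" using c by simp
    finally show ?thesis using that by simp
  qed
  show "W_fun c \<rho> x z \<le> W_fun c \<rho> x y + W_fun c \<rho> y z"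
    if "x \<in> X" "y \<in> X" "z \<in> X" for x y z
  proof -
    have "sinh (\<rho> x z / 2) \<le> sinh ((\<rho> x y + \<rho> y z)/2)"
      using triangle[OF that] by simp
    then have "1 + 2*c* sinh (\<rho> x z / 2) \<le> 1 + 2*c* sinh ((\<rho> x y + \<rho> y z)/2)"
      using c by simp
    also have "\<dots> \<le> (1 + 2*c* sinh (\<rho> x y/2)) * (1 + 2*c* sinh (\<rho> y z/2))"
      by (rule key_ineq) (use c in auto)
    finally have "ln (1 + 2*c* sinh (\<rho> x z / 2)) \<le> ln ((1 + 2*c* sinh (\<rho> x y/2)) * (1 + 2*c* sinh (\<rho> y z/2)))"
      using pos[of x z] by simp
    also have "\<dots> = ln (1 + 2*c* sinh (\<rho> x y/2)) + ln (1 + 2*c* sinh (\<rho> y z/2))"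
      using pos[of x y] pos[of y z] by (simp add: ln_mult)
    finally show ?thesis unfolding W_fun_def .
  qed
qed

lemma bdist_ball_pos:
  fixes x :: "'a::euclidean_space"
  assumes "x \<in> ball 0 1"
  shows "bdist (ball 0 1) x > 0"
proof -
  have "sphere (0::'a) 1 \<noteq> {}" by simp
  moreover have "x \<notin> sphere 0 1" using assms by auto
  ultimately show ?thesis unfolding bdist_def
    by (simp add: infdist_pos_not_in_closed)
qed

lemma bdist_ball_val:
  fixes e :: "'a::euclidean_space"
  assumes "norm e = 1" "0 \<le> t" "t < 1"
  shows "bdist (ball 0 1) (t *\<^sub>R e) = 1 - t"
proof -
  have ne: "sphere (0::'a) 1 \<noteq> {}" by simp
  have "infdist (t *\<^sub>R e) (sphere 0 1) \<le> 1 - t"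
  proof (rule infdist_le2)
    show "e \<in> sphere 0 1" using assms by simp
    have "dist (t *\<^sub>R e) e = norm ((1 - t) *\<^sub>R e)"
      by (simp add: dist_norm algebra_simps norm_minus_commute)
    then show "dist (t *\<^sub>R e) e \<le> 1 - t" using assms by simp
  qed
  moreover have "1 - t \<le> infdist (t *\<^sub>R e) (sphere 0 1)"
    unfolding infdist_notempty[OF ne]
  proof (rule cINF_greatest[OF ne])
    fix s :: 'a assume "s \<in> sphere 0 1"
    then have "norm s = 1" by simp
    moreover have "norm s \<le> norm (t *\<^sub>R e) + dist (t *\<^sub>R e) s"
      by (metis dist_0_norm dist_triangle)
    ultimately show "1 - t \<le> dist (t *\<^sub>R e) s" using assms by simp
  qed
  ultimately show ?thesis unfolding bdist_def by simp
qed

lemma core_j: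
  fixes p m a b :: real
  assumes "p > 0" "m > 0" "m \<le> p + a" "a \<ge> 0" "b \<ge> 0"
  shows "1 + (a + b) / p \<le> (1 + a / p) * (1 + b / m)"
proof -
  have e1: "(1 + a / p) * (1 + b / m) = 1 + a / p + (b / m + (a / p) * (b / m))"
    by (simp add: algebra_simps)
  have e2: "(a + b) / p = a / p + b / p" by (simp add: add_divide_distrib)
  have e3: "b / m + (a / p) * (b / m) = (b * (p + a)) / (p * m)"
    using assms by (simp add: field_simps)
  have e4: "b / p = (b * m) / (p * m)" using assms by simp
  have "b * m \<le> b * (p + a)" using assms by (simp add: mult_left_mono)
  then have "(b * m) / (p * m) \<le> (b * (p + a)) / (p * m)"
    using assms by (intro divide_right_mono) auto
  then show ?thesis unfolding e1 e2 e3 e4 by linarith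
qed

lemma core_j2:
  fixes p q a b :: real
  assumes "0 < q" "q \<le> p" "a \<ge> 0" "b \<ge> 0"
  shows "1 + (a + b) / p \<le> (1 + a / q) * (1 + b / q)"
proof -
  have e1: "(1 + a / q) * (1 + b / q) = 1 + (a / q + b / q) + (a / q) * (b / q)"
    by (simp add: algebra_simps)
  have e2: "a / q + b / q = (a + b) / q" by (simp add: add_divide_distrib)
  have "(a + b) / p \<le> (a + b) / q" using assms by (intro divide_left_mono) auto
  moreover have "0 \<le> (a / q) * (b / q)" using assms by simp
  ultimately show ?thesis unfolding e1 e2 by linarith
qed

lemma j_real:
  fixes dx dy dz a b e :: real
  assumes "dx > 0" "dy > 0" "dz > 0" "a \<ge> 0" "b \<ge> 0" "e \<le> a + b" "e \<ge> 0"
    "\<bar>dx - dy\<bar> \<le> a" "\<bar>dy - dz\<bar> \<le> b"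
  shows "1 + e / min dx dz \<le> (1 + a / min dx dy) * (1 + b / min dy dz)"
proof -
  have "1 + e / min dx dz \<le> 1 + (a + b) / min dx dz"
    using assms by (intro add_left_mono divide_right_mono) auto
  also have "\<dots> \<le> (1 + a / min dx dy) * (1 + b / min dy dz)"
  proof (cases "dx \<le> dz")
    case T1: True
    show ?thesis
    proof (cases "dx \<le> dy")
      case True
      have e1: "min dx dz = dx" "min dx dy = dx" using T1 True by auto
      have "min dy dz \<le> dx + a" using assms(8) by linarith
      then show ?thesis unfolding e1 using assms by (intro core_j) auto
    next
      case False
      have e1: "min dx dy = dy" "min dy dz = dy" "min dx dz = dx" using T1 False by auto
      show ?thesis unfolding e1 using assms False by (intro core_j2) auto
    qed
  next
    case F1: False
    show ?thesis
    proof (cases "dz \<le> dy")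
      case True
      have e1: "min dx dz = dz" "min dy dz = dz" using F1 True by auto
      have "min dx dy \<le> dz + b" using assms(9) by linarith
      then have "1 + (b + a) / dz \<le> (1 + b / dz) * (1 + a / min dx dy)"
        using assms by (intro core_j) auto
      then show ?thesis unfolding e1 by (simp add: add.commute mult.commute)
    next
      case F2: False
      have e1: "min dx dy = dy" "min dy dz = dy" "min dx dz = dz" using F1 F2 by auto
      show ?thesis unfolding e1 using assms F1 F2 by (intro core_j2) auto
    qed
  qed
  finally show ?thesis .
qed

lemma j_metric_ball:
  "Metric_space (ball (0::'a::euclidean_space) 1) (j_metric (ball (0::'a) 1))"
proof
  let ?d = "bdist (ball (0::'a) 1)"
  have d0: "?d x \<ge> 0" for x unfolding bdist_def by (rule infdist_nonneg)
  have dlip: "\<bar>?d x - ?d y\<bar> \<le> dist x y" for x y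
    unfolding bdist_def by (rule infdist_triangle_abs)
  have q0: "dist x y / min (?d x) (?d y) \<ge> 0" for x y using d0[of x] d0[of y] by simp
  show "0 \<le> j_metric (ball (0::'a) 1) x y" for x y
    unfolding j_metric_def using q0[of x y] by simp
  show "j_metric (ball (0::'a) 1) x y = j_metric (ball (0::'a) 1) y x" for x y
    unfolding j_metric_def by (simp add: dist_commute min.commute)
  show "j_metric (ball (0::'a) 1) x y = 0 \<longleftrightarrow> x = y" if "x \<in> ball (0::'a) 1" "y \<in> ball (0::'a) 1" for x y
  proof -
    have p: "min (?d x) (?d y) > 0" using bdist_ball_pos[OF that(1)] bdist_ball_pos[OF that(2)] by simp
    have "j_metric (ball (0::'a) 1) x y = 0 \<longleftrightarrow> 1 + dist x y / min (?d x) (?d y) = 1"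
      unfolding j_metric_def using q0[of x y] by simp
    also have "\<dots> \<longleftrightarrow> x = y" using p by (auto simp del: min_less_iff_conj)
    finally show ?thesis .
  qed
  show "j_metric (ball (0::'a) 1) x z \<le> j_metric (ball (0::'a) 1) x y + j_metric (ball (0::'a) 1) y z"
    if "x \<in> ball (0::'a) 1" "y \<in> ball (0::'a) 1" "z \<in> ball (0::'a) 1" for x y z
  proof -
    have "1 + dist x z / min (?d x) (?d z) \<le> (1 + dist x y / min (?d x) (?d y)) * (1 + dist y z / min (?d y) (?d z))"
      by (rule j_real) (use bdist_ball_pos[OF that(1)] bdist_ball_pos[OF that(2)] bdist_ball_pos[OF that(3)]
          dlip[of x y] dlip[of y z] dist_triangle[of x z y] in auto)
    then have "ln (1 + dist x z / min (?d x) (?d z)) \<le> ln ((1 + dist x y / min (?d x) (?d y)) * (1 + dist y z / min (?d y) (?d z)))"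
      using q0[of x z] by simp
    also have "\<dots> = ln (1 + dist x y / min (?d x) (?d y)) + ln (1 + dist y z / min (?d y) (?d z))"
      using q0[of x y] q0[of y z] by (simp add: ln_mult)
    finally show ?thesis unfolding j_metric_def .
  qed
qed


lemma j_radial:
  fixes e :: "'a::euclidean_space"
  assumes "norm e = 1" "0 \<le> s" "s \<le> t" "t < 1"
  shows "j_metric (ball 0 1) (s *\<^sub>R e) (t *\<^sub>R e) = ln ((1 - s) / (1 - t))"
proof -
  have ds: "bdist (ball 0 1) (s *\<^sub>R e) = 1 - s" using assms by (intro bdist_ball_val) auto
  have dt: "bdist (ball 0 1) (t *\<^sub>R e) = 1 - t" using assms by (intro bdist_ball_val) auto
  have dd: "dist (s *\<^sub>R e) (t *\<^sub>R e) = t - s"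
  proof -
    have "dist (s *\<^sub>R e) (t *\<^sub>R e) = norm ((s - t) *\<^sub>R e)"
      by (simp add: dist_norm scaleR_diff_left)
    also have "\<dots> = t - s" using assms by simp
    finally show ?thesis .
  qed
  have m: "min (1 - s) (1 - t) = 1 - t" using assms by simp
  have "1 + (t - s) / (1 - t) = (1 - s) / (1 - t)" using assms by (simp add: field_simps)
  then show ?thesis unfolding j_metric_def ds dt dd m by simp
qed

lemma W_radial:
  fixes u :: real
  assumes "u > 0"
  shows "ln (1 + 2 * c * sinh (ln (u^2) / 2)) = ln (1 + c * (u - 1/u))"
proof -
  have h1: "ln (u^2) / 2 = ln u" using assms by (simp add: ln_realpow)
  have h2: "sinh (ln u) = (u - 1/u) / 2" using assms sinh_ln_real[of u]
    by (simp add: inverse_eq_divide)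
  have "2 * c * sinh (ln (u^2) / 2) = 2 * c * ((u - 1/u) / 2)" by (simp only: h1 h2)
  also have "\<dots> = c * (u - 1/u)" by simp
  finally have eq: "2 * c * sinh (ln (u^2) / 2) = c * (u - 1/u)" .
  show ?thesis by (simp only: eq)
qed

lemma poly_fail:
  fixes c u :: real
  assumes "0 < c" "c < 1" "u = 3 / (1 - c)"
  shows "(1 + c * (u - 1/u))^2 < 1 + c * (u^2 - 1/u^2)"
proof -
  have u1: "u \<ge> 3" using assms by (simp add: le_divide_eq)
  have "1 - c \<noteq> 0" using assms by simp
  then have uc: "u * (1 - c) = 3" by (simp add: assms(3) field_simps)
  have "(c - 1) * u^2 + 2 * u = - (u * (1 - c)) * u + 2 * u" by (simp add: power2_eq_square algebra_simps)
  then have g1: "(c - 1) * u^2 + 2 * u = - u" unfolding uc by simp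
  have g2: "(c + 1) / u^2 \<le> 2 / u"
  proof -
    have "(c + 1) / u^2 \<le> 2 / u^2" using assms u1 by (simp add: divide_right_mono)
    also have "\<dots> \<le> 2 / u" using u1 by (simp add: frac_le power2_eq_square)
    finally show ?thesis .
  qed
  have g: "(c - 1) * u^2 + 2 * u - 2 * c - 2 / u + (c + 1) / u^2 < 0"
    using g1 g2 u1 assms by linarith
  have eq: "1 + c * (u^2 - 1/u^2) - (1 + c * (u - 1/u))^2
      = - c * ((c - 1) * u^2 + 2 * u - 2 * c - 2 / u + (c + 1) / u^2)"
    using u1 by (simp add: power2_eq_square field_simps)
  have "0 < - c * ((c - 1) * u^2 + 2 * u - 2 * c - 2 / u + (c + 1) / u^2)"
    using g assms by (simp add: mult_pos_neg)
  then show ?thesis using eq by linarith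
qed

lemma W_not_metric:
  assumes "0 < c" "c < 1"
  shows "\<not> Metric_space (ball (0::real^2) 1) (W_fun c (j_metric (ball (0::real^2) 1)))"
proof
  assume M: "Metric_space (ball (0::real^2) 1) (W_fun c (j_metric (ball (0::real^2) 1)))"
  define u where "u = 3 / (1 - c)"
  have u3: "u \<ge> 3" using assms by (simp add: u_def le_divide_eq)
  define r where "r = 1 - 1 / u^2"
  define q where "q = 1 - 1 / u^4"
  define e where "e = (axis 1 1 :: real^2)"
  have ne: "norm e = 1" by (simp add: e_def)
  have u2: "u^2 \<ge> 1" "u^4 \<ge> u^2" using u3 by (auto simp: power_increasing one_le_power)
  have r0: "0 \<le> r" "r < 1" using u3 u2 by (auto simp: r_def)
  have q0: "r \<le> q" "q < 1" using u3 u2 by (auto simp: r_def q_def frac_le)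
  let ?j = "j_metric (ball (0::real^2) 1)"
  have j1: "?j (0 *\<^sub>R e) (r *\<^sub>R e) = ln (u^2)"
    using j_radial[OF ne, of 0 r] r0 by (simp add: r_def)
  have j2: "?j (r *\<^sub>R e) (q *\<^sub>R e) = ln (u^2)"
  proof -
    have "(1 - r) / (1 - q) = u^2" using u3 by (simp add: r_def q_def field_simps)
    then show ?thesis using j_radial[OF ne, of r q] r0 q0 by simp
  qed
  have j3: "?j (0 *\<^sub>R e) (q *\<^sub>R e) = ln ((u^2)^2)"
  proof -
    have "(1 - 0) / (1 - q) = (u^2)^2" using u3 by (simp add: q_def field_simps power_mult[symmetric])
    then show ?thesis using j_radial[OF ne, of 0 q] r0 q0 by simp
  qed
  have W1: "W_fun c ?j (0 *\<^sub>R e) (r *\<^sub>R e) = ln (1 + c * (u - 1/u))"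
    unfolding W_fun_def j1 using u3 by (intro W_radial) auto
  have W2: "W_fun c ?j (r *\<^sub>R e) (q *\<^sub>R e) = ln (1 + c * (u - 1/u))"
    unfolding W_fun_def j2 using u3 by (intro W_radial) auto
  have W3: "W_fun c ?j (0 *\<^sub>R e) (q *\<^sub>R e) = ln (1 + c * (u^2 - 1/u^2))"
    unfolding W_fun_def j3 using u3 W_radial[of "u^2" c] by simp
  have inb: "t *\<^sub>R e \<in> ball (0::real^2) 1" if "0 \<le> t" "t < 1" for t
    using that ne by simp
  have "W_fun c ?j (0 *\<^sub>R e) (q *\<^sub>R e) \<le> W_fun c ?j (0 *\<^sub>R e) (r *\<^sub>R e) + W_fun c ?j (r *\<^sub>R e) (q *\<^sub>R e)"
    by (rule Metric_space.triangle[OF M]) (use inb r0 q0 in auto)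
  then have le: "ln (1 + c * (u^2 - 1/u^2)) \<le> 2 * ln (1 + c * (u - 1/u))"
    unfolding W1 W2 W3 by simp
  have pos: "1 + c * (u - 1/u) > 0"
  proof -
    have "1/u \<le> 1" using u3 by simp
    then have "u - 1/u \<ge> 0" using u3 by linarith
    then have "c * (u - 1/u) \<ge> 0" using assms by simp
    then show ?thesis by linarith
  qed
  have "2 * ln (1 + c * (u - 1/u)) = ln ((1 + c * (u - 1/u))^2)"
    using pos by (simp add: ln_realpow)
  also have "\<dots> < ln (1 + c * (u^2 - 1/u^2))"
  proof -
    have p2: "0 < (1 + c * (u - 1/u))^2" using pos by simp
    have pf: "(1 + c * (u - 1/u))^2 < 1 + c * (u^2 - 1/u^2)" by (rule poly_fail[OF assms u_def])
    have p3: "0 < 1 + c * (u^2 - 1/u^2)" using p2 pf by linarith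
    show ?thesis using ln_less_cancel_iff[OF p2 p3] pf by simp
  qed
  finally show False using le by simp
qed

theorem theorem1p1:
  fixes c :: real and X :: "'a set" and \<rho> :: "'a \<Rightarrow> 'a \<Rightarrow> real"
  assumes "c > 0"
  shows "(Metric_space X \<rho> \<and> c \<ge> 1 \<longrightarrow> Metric_space X (W_fun c \<rho>))
       \<and> (Metric_space (ball (0::real^2) 1) (W_fun c (j_metric (ball (0::real^2) 1))) \<longleftrightarrow> c \<ge> 1)"
proof -
  have "Metric_space (ball (0::real^2) 1) (W_fun c (j_metric (ball (0::real^2) 1)))" if "c \<ge> 1"
    using W_metric[OF j_metric_ball that] .
  moreover have "c \<ge> 1" if "Metric_space (ball (0::real^2) 1) (W_fun c (j_metric (ball (0::real^2) 1)))"
    using W_not_metric[of c] assms that by force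
  ultimately show ?thesis using W_metric by blast
qed

end
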